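(* Let $\{W_i\}_{i=1}^M$ be subspaces of $\mathbb{R}^N$ such that $\sum_{i=1}^M\dim(W_i)=N$. Then $\{W_i\}_{i=1}^M$ does norm retrieval if and only if the subspaces $W_i$ are pairwise orthogonal.
   Context: A family of subspaces $\{W_i\}_{i=1}^M$ of $\mathbb{R}^N$ with orthogonal projections $\{P_i\}_{i=1}^M$ does norm retrieval if for all $x,y\in\mathbb{R}^N$, $\|P_ix\|=\|P_iy\|$ for all $i$ implies $\|x\|=\|y\|$. *)

theory Defs
  imports "HOL-Analysis.Analysis"
begin

definition orth_proj :: "'a::euclidean_space set \<Rightarrow> 'a \<Rightarrow> 'a" where
  "orth_proj W x = (THE y. y \<in> W \<and> (\<forall>w\<in>W. orthogonal (x - y) w))"

definition norm_retrieval :: "nat \<Rightarrow> (nat \<Rightarrow> 'a::euclidean_space set) \<Rightarrow> bool" where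
  "norm_retrieval M W \<longleftrightarrow>
     (\<forall>x y. (\<forall>i<M. norm (orth_proj (W i) x) = norm (orth_proj (W i) y)) \<longrightarrow> norm x = norm y)"

end

theory Submission
  imports Defs
begin

lemma proj_exists:
  fixes W :: "'a::euclidean_space set"
  assumes "subspace W"
  shows "\<exists>y. y \<in> W \<and> (\<forall>w\<in>W. orthogonal (x - y) w)"
proof -
  obtain y z where "y \<in> span W" "\<And>w. w \<in> span W \<Longrightarrow> orthogonal z w" "x = y + z"
    using orthogonal_subspace_decomp_exists[of W x] by blast
  then show ?thesis using assms span_eq_iff span_superset
    by (metis add_diff_cancel_left' subsetD)
qed

lemma proj_char:
  fixes W :: "'a::euclidean_space set"
  assumes "subspace W" "y \<in> W" "\<forall>w\<in>W. orthogonal (x - y) w"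
  shows "orth_proj W x = y"
  unfolding orth_proj_def
proof (rule the_equality)
  show "y \<in> W \<and> (\<forall>w\<in>W. orthogonal (x - y) w)" using assms by blast
next
  fix y' assume h: "y' \<in> W \<and> (\<forall>w\<in>W. orthogonal (x - y') w)"
  have d: "y' - y \<in> W" using h assms subspace_diff by blast
  have "orthogonal (x - y) (y' - y)" "orthogonal (x - y') (y' - y)" using d h assms by auto
  then have "orthogonal ((x - y) - (x - y')) (y' - y)"
    by (simp add: orthogonal_def inner_diff_left)
  then have "orthogonal (y' - y) (y' - y)" by (simp add: algebra_simps)
  then show "y' = y" by (metis orthogonal_self eq_iff_diff_eq_0)
qed

lemma proj_props:
  fixes W :: "'a::euclidean_space set"
  assumes "subspace W"
  shows "orth_proj W x \<in> W" "\<forall>w\<in>W. orthogonal (x - orth_proj W x) w"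
proof -
  obtain y where y: "y \<in> W" "\<forall>w\<in>W. orthogonal (x - y) w" using proj_exists[OF assms] by blast
  have "orth_proj W x = y" using proj_char[OF assms y] .
  then show "orth_proj W x \<in> W" "\<forall>w\<in>W. orthogonal (x - orth_proj W x) w" using y by auto
qed

lemma dim_Un_le:
  fixes A B :: "'a::euclidean_space set"
  shows "dim (A \<union> B) \<le> dim A + dim B"
proof -
  obtain BA where a: "BA \<subseteq> A" "independent BA" "A \<subseteq> span BA" "card BA = dim A"
    using basis_exists by blast
  obtain BB where b: "BB \<subseteq> B" "independent BB" "B \<subseteq> span BB" "card BB = dim B"
    using basis_exists by blast
  have f: "finite (BA \<union> BB)" using a b finiteI_independent by blast
  have "A \<union> B \<subseteq> span (BA \<union> BB)" using a b by (meson Un_least le_sup_iff span_mono subset_trans sup.cobounded1 sup.cobounded2)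
  then have "dim (A \<union> B) \<le> card (BA \<union> BB)" using dim_le_card f by blast
  also have "\<dots> \<le> card BA + card BB" by (rule card_Un_le)
  finally show ?thesis using a b by simp
qed

lemma dim_UN_le:
  fixes W :: "nat \<Rightarrow> 'a::euclidean_space set"
  assumes "finite I"
  shows "dim (\<Union>j\<in>I. W j) \<le> (\<Sum>j\<in>I. dim (W j))"
  using assms
proof (induction I rule: finite_induct)
  case empty then show ?case by simp
next
  case (insert a F)
  have "dim (\<Union>j\<in>insert a F. W j) = dim (W a \<union> (\<Union>j\<in>F. W j))" by simp
  also have "\<dots> \<le> dim (W a) + dim (\<Union>j\<in>F. W j)" by (rule dim_Un_le)
  also have "\<dots> \<le> dim (W a) + (\<Sum>j\<in>F. dim (W j))" using insert by simp
  finally show ?case using insert by simp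
qed

lemma key_in:
  fixes W :: "nat \<Rightarrow> 'a::euclidean_space set"
  assumes sub: "\<forall>i<M. subspace (W i)" and nr: "norm_retrieval M W" and i: "i < M"
    and yC: "\<forall>k<M. k \<noteq> i \<longrightarrow> (\<forall>w\<in>W k. orthogonal w y)"
  shows "y \<in> W i"
proof -
  define p where "p = orth_proj (W i) y"
  have si: "subspace (W i)" using sub i by blast
  have pW: "p \<in> W i" and po: "\<forall>w\<in>W i. orthogonal (y - p) w"
    using proj_props[OF si, of y] unfolding p_def by auto
  define x where "x = 2 *\<^sub>R y - p"
  have eq: "norm (orth_proj (W k) x) = norm (orth_proj (W k) p)" if k: "k < M" for k
  proof (cases "k = i")
    case True
    have "orth_proj (W i) x = p"
    proof (rule proj_char[OF si pW], intro ballI)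
      fix w assume "w \<in> W i"
      then have "orthogonal (y - p) w" using po by blast
      then have "orthogonal (2 *\<^sub>R (y - p)) w" by (simp add: orthogonal_clauses)
      moreover have "x - p = 2 *\<^sub>R (y - p)" unfolding x_def by (simp add: algebra_simps scaleR_2)
      ultimately show "orthogonal (x - p) w" by simp
    qed
    moreover have "orth_proj (W i) p = p"
      by (rule proj_char[OF si pW]) (simp add: orthogonal_clauses)
    ultimately show ?thesis using True by simp
  next
    case False
    have sk: "subspace (W k)" using sub k by blast
    define q where "q = orth_proj (W k) p"
    have qW: "q \<in> W k" and qo: "\<forall>w\<in>W k. orthogonal (p - q) w"
      using proj_props[OF sk, of p] unfolding q_def by auto
    have "orth_proj (W k) x = - q"
    proof (rule proj_char[OF sk], simp add: qW sk subspace_neg, intro ballI)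
      fix w assume w: "w \<in> W k"
      have "orthogonal y w" using yC k False w by (simp add: orthogonal_commute)
      moreover have "orthogonal (p - q) w" using qo w by blast
      ultimately have "orthogonal (2 *\<^sub>R y - (p - q)) w"
        by (simp add: orthogonal_def inner_diff_left)
      moreover have "x - - q = 2 *\<^sub>R y - (p - q)" unfolding x_def by (simp add: algebra_simps)
      ultimately show "orthogonal (x - - q) w" by metis
    qed
    then show ?thesis unfolding q_def by simp
  qed
  have "norm x = norm p" using nr eq unfolding norm_retrieval_def by blast
  then have "x \<bullet> x = p \<bullet> p" by (metis power2_norm_eq_inner)
  moreover have "x = 2 *\<^sub>R (y - p) + p" unfolding x_def by (simp add: algebra_simps scaleR_2)
  moreover have "(y - p) \<bullet> p = 0" using po pW by (simp add: orthogonal_def)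
  ultimately have "4 * ((y - p) \<bullet> (y - p)) = 0"
    by (simp add: inner_add_left inner_add_right inner_commute algebra_simps)
  then have "y - p = 0" by simp
  then show ?thesis using pW by simp
qed

lemma forward:
  fixes W :: "nat \<Rightarrow> 'a::euclidean_space set"
  assumes sub: "\<forall>i<M. subspace (W i)" and dsum: "(\<Sum>i<M. dim (W i)) = DIM('a)"
    and nr: "norm_retrieval M W"
    and i: "i < M" and j: "j < M" "i \<noteq> j" and u: "u \<in> W i" and v: "v \<in> W j"
  shows "orthogonal u v"
proof -
  define U where "U = (\<Union>k\<in>{..<M}-{i}. W k)"
  define C where "C = {y. \<forall>x\<in>span U. orthogonal x y}"
  have si: "subspace (W i)" using sub i by blast
  have CW: "C \<subseteq> W i"
  proof
    fix y assume y: "y \<in> C"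
    have "\<forall>k<M. k \<noteq> i \<longrightarrow> (\<forall>w\<in>W k. orthogonal w y)"
    proof (intro allI impI ballI)
      fix k w assume "k < M" "k \<noteq> i" "w \<in> W k"
      then have "w \<in> span U" unfolding U_def by (intro span_base) blast
      then show "orthogonal w y" using y unfolding C_def by blast
    qed
    then show "y \<in> W i" using key_in[OF sub nr i] by blast
  qed
  have sC: "subspace C" unfolding C_def by (rule subspace_orthogonal_to_vectors)
  have d1: "dim C + dim (span U) = DIM('a)"
    using dim_subspace_orthogonal_to_vectors[of "span U" UNIV] unfolding C_def
    by (simp add: subspace_span)
  have d2: "dim U \<le> (\<Sum>k\<in>{..<M}-{i}. dim (W k))" unfolding U_def by (rule dim_UN_le) simp
  have d3: "(\<Sum>k<M. dim (W k)) = dim (W i) + (\<Sum>k\<in>{..<M}-{i}. dim (W k))"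
    using i by (simp add: sum.remove)
  have "dim (W i) \<le> dim C" using d1 d2 d3 dsum by simp
  then have "C = W i" using subspace_dim_equal[OF sC si CW] by blast
  then have "u \<in> C" using u by simp
  moreover have "v \<in> span U" unfolding U_def using v j by (intro span_base) blast
  ultimately show ?thesis unfolding C_def using orthogonal_commute by blast
qed

lemma spans_all:
  fixes W :: "nat \<Rightarrow> 'a::euclidean_space set"
  assumes sub: "\<forall>i<M. subspace (W i)" and dsum: "(\<Sum>i<M. dim (W i)) = DIM('a)"
    and orth: "\<forall>i<M. \<forall>j<M. i \<noteq> j \<longrightarrow> (\<forall>u\<in>W i. \<forall>v\<in>W j. orthogonal u v)"
  shows "z \<in> span (\<Union>i<M. W i)"
proof -
  have "\<forall>i\<in>{..<M}. \<exists>B. B \<subseteq> W i \<and> pairwise orthogonal B \<and> (\<forall>x\<in>B. norm x = 1)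
        \<and> independent B \<and> card B = dim (W i)"
  proof
    fix i assume "i \<in> {..<M}"
    then have "subspace (W i)" using sub by blast
    then obtain B where "B \<subseteq> W i" "pairwise orthogonal B" "\<And>x. x \<in> B \<Longrightarrow> norm x = 1"
      "independent B" "card B = dim (W i)" using orthonormal_basis_subspace by metis
    then show "\<exists>B. B \<subseteq> W i \<and> pairwise orthogonal B \<and> (\<forall>x\<in>B. norm x = 1)
        \<and> independent B \<and> card B = dim (W i)" by blast
  qed
  then obtain B where B: "\<And>i. i \<in> {..<M} \<Longrightarrow> B i \<subseteq> W i \<and> pairwise orthogonal (B i)
      \<and> (\<forall>x\<in>B i. norm x = 1) \<and> independent (B i) \<and> card (B i) = dim (W i)"
    by metis
  define BB where "BB = (\<Union>i<M. B i)"
  have fin: "\<forall>i\<in>{..<M}. finite (B i)" using B finiteI_independent by blast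
  have disj: "\<forall>i\<in>{..<M}. \<forall>j\<in>{..<M}. i \<noteq> j \<longrightarrow> B i \<inter> B j = {}"
  proof (intro ballI impI)
    fix i j assume ij: "i \<in> {..<M}" "j \<in> {..<M}" "i \<noteq> j"
    show "B i \<inter> B j = {}"
    proof (rule ccontr)
      assume "B i \<inter> B j \<noteq> {}"
      then obtain a where a: "a \<in> B i" "a \<in> B j" by blast
      then have "orthogonal a a" using orth ij B by blast
      then have "a = 0" by (simp add: orthogonal_self)
      then show False using a B ij by fastforce
    qed
  qed
  have cardBB: "card BB = DIM('a)"
    unfolding BB_def using card_UN_disjoint[OF _ fin disj] dsum B by simp
  have po: "pairwise orthogonal BB"
    unfolding pairwise_def BB_def
  proof (intro ballI impI)
    fix a b assume a: "a \<in> (\<Union>i<M. B i)" and b: "b \<in> (\<Union>i<M. B i)" and ab: "a \<noteq> b"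
    obtain i where i: "i < M" "a \<in> B i" using a by blast
    obtain j where j: "j < M" "b \<in> B j" using b by blast
    show "orthogonal a b"
    proof (cases "i = j")
      case True
      then show ?thesis using B i j ab unfolding pairwise_def by blast
    next
      case False
      then show ?thesis using orth B i j by blast
    qed
  qed
  have "0 \<notin> BB" unfolding BB_def using B by fastforce
  then have ind: "independent BB" using pairwise_orthogonal_independent po by blast
  have "UNIV \<subseteq> span BB" by (rule card_ge_dim_independent) (use ind cardBB in auto)
  moreover have "span BB \<subseteq> span (\<Union>i<M. W i)" unfolding BB_def
    by (rule span_mono) (use B in blast)
  ultimately show ?thesis by blast
qed

lemma decomp:
  fixes W :: "nat \<Rightarrow> 'a::euclidean_space set"
  assumes sub: "\<forall>i<M. subspace (W i)" and dsum: "(\<Sum>i<M. dim (W i)) = DIM('a)"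
    and orth: "\<forall>i<M. \<forall>j<M. i \<noteq> j \<longrightarrow> (\<forall>u\<in>W i. \<forall>v\<in>W j. orthogonal u v)"
  shows "(norm x)\<^sup>2 = (\<Sum>i<M. (norm (orth_proj (W i) x))\<^sup>2)"
proof -
  define P where "P i = orth_proj (W i) x" for i
  have PW: "P i \<in> W i" "\<forall>w\<in>W i. orthogonal (x - P i) w" if "i < M" for i
    using proj_props[of "W i" x] sub that unfolding P_def by auto
  define r where "r = x - (\<Sum>i<M. P i)"
  have ro: "orthogonal r w" if w: "w \<in> (\<Union>i<M. W i)" for w
  proof -
    obtain j where j: "j < M" "w \<in> W j" using w by blast
    have z: "P i \<bullet> w = 0" if "i \<in> {..<M} - {j}" for i
      using orth PW that j by (auto simp: orthogonal_def)
    have "r \<bullet> w = x \<bullet> w - (\<Sum>i<M. P i \<bullet> w)" unfolding r_def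
      by (simp add: inner_diff_left inner_sum_left)
    also have "(\<Sum>i<M. P i \<bullet> w) = P j \<bullet> w + (\<Sum>i\<in>{..<M}-{j}. P i \<bullet> w)"
      using j by (simp add: sum.remove)
    also have "(\<Sum>i\<in>{..<M}-{j}. P i \<bullet> w) = 0" using z by simp
    finally have "r \<bullet> w = (x - P j) \<bullet> w" by (simp add: inner_diff_left)
    also have "\<dots> = 0" using PW j by (simp add: orthogonal_def)
    finally show ?thesis by (simp add: orthogonal_def)
  qed
  have "r \<in> span (\<Union>i<M. W i)" by (rule spans_all[OF sub dsum orth])
  then have "orthogonal r r" using orthogonal_to_span ro by blast
  then have "r = 0" by (simp add: orthogonal_self)
  then have xe: "x = (\<Sum>i<M. P i)" unfolding r_def by simp
  have "pairwise (\<lambda>i j. orthogonal (P i) (P j)) {..<M}"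
    unfolding pairwise_def using orth PW by auto
  then have "(norm (\<Sum>i<M. P i))\<^sup>2 = (\<Sum>i<M. (norm (P i))\<^sup>2)"
    by (intro norm_sum_Pythagorean) auto
  then show ?thesis using xe unfolding P_def by simp
qed

theorem mainTheorem8:
  fixes W :: "nat \<Rightarrow> 'a::euclidean_space set" and M :: nat
  assumes "\<forall>i<M. subspace (W i)"
    and "(\<Sum>i<M. dim (W i)) = DIM('a)"
  shows "norm_retrieval M W \<longleftrightarrow>
    (\<forall>i<M. \<forall>j<M. i \<noteq> j \<longrightarrow> (\<forall>u\<in>W i. \<forall>v\<in>W j. orthogonal u v))"
proof
  assume "norm_retrieval M W"
  then show "\<forall>i<M. \<forall>j<M. i \<noteq> j \<longrightarrow> (\<forall>u\<in>W i. \<forall>v\<in>W j. orthogonal u v)"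
    using forward[OF assms] by blast
next
  assume orth: "\<forall>i<M. \<forall>j<M. i \<noteq> j \<longrightarrow> (\<forall>u\<in>W i. \<forall>v\<in>W j. orthogonal u v)"
  show "norm_retrieval M W"
    unfolding norm_retrieval_def
  proof (intro allI impI)
    fix x y :: 'a
    assume h: "\<forall>i<M. norm (orth_proj (W i) x) = norm (orth_proj (W i) y)"
    have "(norm x)\<^sup>2 = (norm y)\<^sup>2"
      using decomp[OF assms orth, of x] decomp[OF assms orth, of y] h by simp
    then show "norm x = norm y" by (simp add: power2_eq_iff_nonneg)
  qed
qed

end
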